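(* Let $U$ be a nonempty open subset of $\mathbb{R}^d$ and let $(a_n)_{n\ge1}$ be a sequence of points of $U$ such that $\inf_\lambda\liminf_{j\to\infty}2^{-dj}\#\mathrm{M}((a_n)_{n\ge1};\lambda,j)>0$, the infimum over all nonempty dyadic cubes $\lambda\subseteq U$. Let $\mathcal{A}=\{a_n:n\ge1\}$ and define $H:\mathcal{A}\to(0,\infty)$ by $H(a)=(\min\{n\ge1:a=a_n\})^{1/d}$. Then $(\mathcal{A},H)$ is an optimal regular system in $U$.
   Context: Fix a norm $|\cdot|$ on $\mathbb{R}^d$, diameters taken with respect to it. Let $\mathcal{A}\subseteq\mathbb{R}^d$ be countably infinite and $H:\mathcal{A}\to(0,\infty)$. The pair $(\mathcal{A},H)$ is admissible if for every integer $m\ge1$ the set $\{a\in\mathcal{A}:|a|<m,\ H(a)\le m\}$ is finite. It is a regular system in an open set $U$ if it is admissible and there is $\kappa>0$ such that for every open ball $B\subseteq U$ there is $h_B>0$ such that for all $h>h_B$ there is $\mathcal{A}_{B,h}\subseteq\mathcal{A}\cap B$ with $\#\mathcal{A}_{B,h}\ge\kappa(\mathrm{diam}\,B)^dh^d$, $H(a)\le h$ for $a\in\mathcal{A}_{B,h}$, and $|a-a'|\ge1/h$ for distinct $a,a'\in\mathcal{A}_{B,h}$. It is an optimal system in $U$ if it is admissible and for every open ball $B$ there are $\kappa'_B,h'_B>0$ with $\#\{a\in\mathcal{A}\cap U\cap B:H(a)\le h\}\le\kappa'_Bh^d$ for $h>h'_B$. An optimal regular system is one that is both. A dyadic cube is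 $\lambda=2^{-j}(k+[0,1)^d)$, $j\in\mathbb{Z}$, $k\in\mathbb{Z}^d$, of generation $\langle\lambda\rangle=j$; $\mathrm{M}((x_n)_{n\ge1};\lambda,j)$ is the set of dyadic cubes $\lambda'\subseteq\lambda$ of generation $\langle\lambda\rangle+j$ containing some $x_n$ with $n\le2^{d\langle\lambda'\rangle}$. *)

theory Defs
  imports "HOL-Analysis.Analysis"
begin

definition is_norm :: "(real^'n \<Rightarrow> real) \<Rightarrow> bool" where
  "is_norm N \<longleftrightarrow> (\<forall>x. 0 \<le> N x) \<and> (\<forall>x. N x = 0 \<longleftrightarrow> x = 0)
     \<and> (\<forall>c x. N (c *\<^sub>R x) = \<bar>c\<bar> * N x) \<and> (\<forall>x y. N (x + y) \<le> N x + N y)"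

definition nball :: "(real^'n \<Rightarrow> real) \<Rightarrow> real^'n \<Rightarrow> real \<Rightarrow> (real^'n) set" where
  "nball N x r = {y. N (y - x) < r}"

definition ndiam :: "(real^'n \<Rightarrow> real) \<Rightarrow> (real^'n) set \<Rightarrow> real" where
  "ndiam N S = Sup {N (y - z) | y z. y \<in> S \<and> z \<in> S}"

definition admissible :: "(real^'n \<Rightarrow> real) \<Rightarrow> (real^'n) set \<Rightarrow> (real^'n \<Rightarrow> real) \<Rightarrow> bool" where
  "admissible N A H \<longleftrightarrow> countable A \<and> infinite A \<and> (\<forall>a\<in>A. 0 < H a)
     \<and> (\<forall>m::nat. m \<ge> 1 \<longrightarrow> finite {a\<in>A. N a < real m \<and> H a \<le> real m})"

definition regular_system ::
  "(real^'n \<Rightarrow> real) \<Rightarrow> (real^'n) set \<Rightarrow> (real^'n \<Rightarrow> real) \<Rightarrow> (real^'n) set \<Rightarrow> bool" where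
  "regular_system N A H U \<longleftrightarrow> admissible N A H \<and>
     (\<exists>\<kappa>>0. \<forall>x r. r > 0 \<and> nball N x r \<subseteq> U \<longrightarrow>
        (\<exists>hB>0. \<forall>h>hB. \<exists>S. S \<subseteq> A \<inter> nball N x r \<and> finite S
            \<and> real (card S) \<ge> \<kappa> * (ndiam N (nball N x r)) ^ CARD('n) * h ^ CARD('n)
            \<and> (\<forall>a\<in>S. H a \<le> h)
            \<and> (\<forall>a\<in>S. \<forall>a'\<in>S. a \<noteq> a' \<longrightarrow> N (a - a') \<ge> 1 / h)))"

definition optimal_system ::
  "(real^'n \<Rightarrow> real) \<Rightarrow> (real^'n) set \<Rightarrow> (real^'n \<Rightarrow> real) \<Rightarrow> (real^'n) set \<Rightarrow> bool" where
  "optimal_system N A H U \<longleftrightarrow> admissible N A H \<and>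
     (\<forall>x r. r > 0 \<longrightarrow> (\<exists>\<kappa>'>0. \<exists>h'>0. \<forall>h>h'.
        finite {a \<in> A \<inter> U \<inter> nball N x r. H a \<le> h} \<and>
        real (card {a \<in> A \<inter> U \<inter> nball N x r. H a \<le> h}) \<le> \<kappa>' * h ^ CARD('n)))"

definition optimal_regular_system ::
  "(real^'n \<Rightarrow> real) \<Rightarrow> (real^'n) set \<Rightarrow> (real^'n \<Rightarrow> real) \<Rightarrow> (real^'n) set \<Rightarrow> bool" where
  "optimal_regular_system N A H U \<longleftrightarrow> optimal_system N A H U \<and> regular_system N A H U"

definition dyadic_cube :: "int \<Rightarrow> ('n \<Rightarrow> int) \<Rightarrow> (real^'n) set" where
  "dyadic_cube j k = {x. \<forall>i. real_of_int (k i) \<le> 2 powr (real_of_int j) * x $ i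
                            \<and> 2 powr (real_of_int j) * x $ i < real_of_int (k i) + 1}"

text \<open>M((x_n); lambda, j) for lambda = dyadic_cube g k, represented by the
  indices k' of the subcubes of generation g + j.\<close>
definition dyadicM :: "(nat \<Rightarrow> real^'n) \<Rightarrow> int \<Rightarrow> ('n \<Rightarrow> int) \<Rightarrow> nat \<Rightarrow> ('n \<Rightarrow> int) set" where
  "dyadicM x g k j = {k'. dyadic_cube (g + int j) k' \<subseteq> dyadic_cube g k \<and>
      (\<exists>n\<ge>1. real n \<le> 2 powr (real CARD('n) * real_of_int (g + int j))
              \<and> x n \<in> dyadic_cube (g + int j) k')}"

end

theory Submission
  imports Defs
begin

lemma isn_basic:
  assumes "is_norm N"
  shows "N 0 = 0" "N (- x) = N x" "N (x - y) = N (y - x)" "N (x + y) \<le> N x + N y"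
    "N (c *\<^sub>R x) = \<bar>c\<bar> * N x" "0 \<le> N x" "N x = 0 \<longleftrightarrow> x = 0"
proof -
  show "N 0 = 0" "N (x + y) \<le> N x + N y" "N (c *\<^sub>R x) = \<bar>c\<bar> * N x" "0 \<le> N x"
    "N x = 0 \<longleftrightarrow> x = 0" for x y c using assms unfolding is_norm_def by auto
  have *: "N (- x) = N x" for x
  proof -
    have "N ((-1) *\<^sub>R x) = \<bar>-1\<bar> * N x" using assms unfolding is_norm_def by blast
    then show ?thesis by simp
  qed
  show "N (- x) = N x" for x by (rule *)
  show "N (x - y) = N (y - x)" using *[of "y - x"] by simp
qed

lemma isn_sum:
  assumes "is_norm N" "finite S"
  shows "N (sum f S) \<le> (\<Sum>i\<in>S. N (f i))"
  using assms(2)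
proof (induction S rule: finite_induct)
  case empty then show ?case by (simp add: isn_basic(1)[OF assms(1)])
next
  case (insert i S)
  then show ?case using isn_basic(4)[OF assms(1), of "f i" "sum f S"] by simp
qed

lemma isn_upper:
  fixes N :: "real^'n \<Rightarrow> real"
  assumes "is_norm N"
  shows "\<exists>C>0. \<forall>y. N y \<le> C * norm y"
proof -
  define C where "C = (\<Sum>i\<in>(UNIV::'n set). N (axis i 1)) + 1"
  have C0: "C > 0" unfolding C_def using isn_basic(6)[OF assms]
    by (simp add: add_pos_nonneg sum_nonneg add.commute)
  have "N y \<le> C * norm y" for y
  proof -
    have "N y = N (\<Sum>i\<in>UNIV. y $ i *\<^sub>R axis i 1)"
      using basis_expansion[of y] by (simp add: scalar_mult_eq_scaleR)
    also have "\<dots> \<le> (\<Sum>i\<in>UNIV. N (y $ i *\<^sub>R axis i 1))" by (rule isn_sum[OF assms]) simp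
    also have "\<dots> = (\<Sum>i\<in>UNIV. \<bar>y $ i\<bar> * N (axis i 1))" using isn_basic(5)[OF assms] by simp
    also have "\<dots> \<le> (\<Sum>i\<in>UNIV. norm y * N (axis i 1))"
      by (rule sum_mono, rule mult_right_mono, rule component_le_norm_cart, rule isn_basic(6)[OF assms])
    also have "\<dots> \<le> norm y * C" unfolding C_def by (simp add: sum_distrib_left algebra_simps)
    finally show ?thesis by (simp add: mult.commute)
  qed
  with C0 show ?thesis by blast
qed

lemma isn_lower:
  fixes N :: "real^'n \<Rightarrow> real"
  assumes "is_norm N"
  shows "\<exists>m>0. \<forall>y. m * norm y \<le> N y"
proof -
  obtain C where C: "C > 0" "\<And>y. N y \<le> C * norm y" using isn_upper[OF assms] by blast
  have cont: "continuous_on (sphere 0 1) N"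
    unfolding continuous_on_iff
  proof (intro ballI allI impI)
    fix x e assume "x \<in> sphere (0::real^'n) 1" "(e::real) > 0"
    show "\<exists>d>0. \<forall>x'\<in>sphere 0 1. dist x' x < d \<longrightarrow> dist (N x') (N x) < e"
    proof (intro exI[of _ "e / C"] conjI ballI impI)
      show "e / C > 0" using C \<open>e>0\<close> by simp
      fix x' assume "x' \<in> sphere (0::real^'n) 1" "dist x' x < e / C"
      have "N x' \<le> N x + N (x' - x)" using isn_basic(4)[OF assms, of x "x' - x"] by simp
      moreover have "N x \<le> N x' + N (x' - x)" using isn_basic(4)[OF assms, of x' "x - x'"]
        isn_basic(3)[OF assms, of x x'] by simp
      ultimately have "dist (N x') (N x) \<le> N (x' - x)" by (simp add: dist_real_def)
      also have "\<dots> \<le> C * norm (x' - x)" by (rule C)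
      also have "\<dots> < e" using \<open>dist x' x < e / C\<close> C by (simp add: dist_norm field_simps)
      finally show "dist (N x') (N x) < e" .
    qed
  qed
  obtain i :: 'n where True by blast
  have ne: "sphere (0::real^'n) 1 \<noteq> {}" using norm_axis_1[of i] by (metis mem_sphere_0 empty_iff)
  obtain x0 where x0: "x0 \<in> sphere 0 1" "\<And>y. y \<in> sphere 0 1 \<Longrightarrow> N x0 \<le> N y"
    using continuous_attains_inf[OF compact_sphere ne cont] by blast
  have m0: "N x0 > 0" using x0(1) isn_basic(6,7)[OF assms, of x0]
    by (metis less_eq_real_def mem_sphere_0 norm_zero zero_neq_one)
  have "N x0 * norm y \<le> N y" for y
  proof (cases "y = 0")
    case True then show ?thesis using isn_basic(1)[OF assms] by simp
  next
    case False
    then have "(1 / norm y) *\<^sub>R y \<in> sphere 0 1" by simp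
    then have "N x0 \<le> N ((1 / norm y) *\<^sub>R y)" by (rule x0(2))
    also have "\<dots> = N y / norm y" using isn_basic(5)[OF assms] by simp
    finally show ?thesis using False by (simp add: field_simps)
  qed
  with m0 show ?thesis by blast
qed

lemma cube_index:
  assumes "x \<in> dyadic_cube G k"
  shows "k i = \<lfloor>2 powr real_of_int G * x $ i\<rfloor>"
  using assms unfolding dyadic_cube_def by (metis (mono_tags, lifting) floor_unique mem_Collect_eq)

lemma cube_exists: "x \<in> dyadic_cube G (\<lambda>i. \<lfloor>2 powr real_of_int G * x $ i\<rfloor>)"
  unfolding dyadic_cube_def by auto

lemma cube_coord:
  assumes "x \<in> dyadic_cube G k" "y \<in> dyadic_cube G k"
  shows "\<bar>x $ i - y $ i\<bar> < 2 powr (- real_of_int G)"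
proof -
  have "\<bar>2 powr real_of_int G * x $ i - 2 powr real_of_int G * y $ i\<bar> < 1"
  proof -
    have "real_of_int (k i) \<le> 2 powr real_of_int G * x $ i"
      "2 powr real_of_int G * x $ i < real_of_int (k i) + 1"
      "real_of_int (k i) \<le> 2 powr real_of_int G * y $ i"
      "2 powr real_of_int G * y $ i < real_of_int (k i) + 1"
      using assms unfolding dyadic_cube_def by auto
    then show ?thesis by linarith
  qed
  then have "2 powr real_of_int G * \<bar>x $ i - y $ i\<bar> < 1"
    by (simp add: abs_mult right_diff_distrib[symmetric])
  then show ?thesis by (simp add: powr_minus field_simps)
qed

lemma cube_small:
  fixes x y :: "real^'n"
  assumes "x \<in> dyadic_cube G k" "y \<in> dyadic_cube G k"
  shows "norm (x - y) \<le> real CARD('n) * 2 powr (- real_of_int G)"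
proof -
  have "norm (x - y) \<le> (\<Sum>i\<in>UNIV. \<bar>(x - y) $ i\<bar>)" by (rule norm_le_l1_cart)
  also have "\<dots> \<le> (\<Sum>i\<in>(UNIV::'n set). 2 powr (- real_of_int G))"
    by (rule sum_mono) (use cube_coord[OF assms] in \<open>simp add: less_imp_le\<close>)
  finally show ?thesis by simp
qed

lemma cube_sep:
  assumes "x \<in> dyadic_cube G k" "y \<in> dyadic_cube G k'" "k i \<noteq> k' i" "k i mod 2 = k' i mod 2"
  shows "2 powr (- real_of_int G) \<le> norm (x - y)"
proof -
  have "2 dvd (k i - k' i)" using assms(4) by (simp add: mod_eq_dvd_iff)
  then have "\<bar>k i - k' i\<bar> \<ge> 2" using assms(3) by (auto simp: dvd_def abs_mult)
  then have "\<bar>real_of_int (k i) - real_of_int (k' i)\<bar> \<ge> 2" by linarith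
  moreover have "real_of_int (k i) \<le> 2 powr real_of_int G * x $ i"
    "2 powr real_of_int G * x $ i < real_of_int (k i) + 1"
    "real_of_int (k' i) \<le> 2 powr real_of_int G * y $ i"
    "2 powr real_of_int G * y $ i < real_of_int (k' i) + 1"
    using assms(1,2) unfolding dyadic_cube_def by auto
  ultimately have "1 < \<bar>2 powr real_of_int G * x $ i - 2 powr real_of_int G * y $ i\<bar>" by linarith
  then have "1 < 2 powr real_of_int G * \<bar>x $ i - y $ i\<bar>"
    by (simp add: abs_mult right_diff_distrib[symmetric])
  then have "2 powr (- real_of_int G) < \<bar>x $ i - y $ i\<bar>" by (simp add: powr_minus field_simps)
  also have "\<bar>x $ i - y $ i\<bar> \<le> norm (x - y)" using component_le_norm_cart[of "x - y" i] by simp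
  finally show ?thesis by simp
qed

lemma pigeon:
  assumes "finite M" "finite T" "f ` M \<subseteq> T"
  shows "\<exists>P. card M \<le> card T * card {x\<in>M. f x = P}"
proof (cases "T = {}")
  case True then show ?thesis using assms by auto
next
  case False
  define g where "g P = card {x\<in>M. f x = P}" for P
  have "Max (g ` T) \<in> g ` T" using Max_in[of "g ` T"] assms(2) False by auto
  then obtain P where P: "P \<in> T" "g P = Max (g ` T)" by auto
  have le: "g Q \<le> g P" if "Q \<in> T" for Q using P(2) assms(2) that by simp
  have "card M = (\<Sum>Q\<in>T. g Q)" unfolding g_def
    using sum.group[OF assms, of "\<lambda>_. 1::nat"] by simp
  also have "\<dots> \<le> card T * g P" using sum_bounded_above[of T g "g P"] le by simp
  finally show ?thesis unfolding g_def by blast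
qed

lemma regular_core:
  fixes N :: "real^'n \<Rightarrow> real" and a :: "nat \<Rightarrow> real^'n" and U :: "(real^'n) set"
  assumes nrm: "is_norm N"
    and C: "C > 0" "\<And>y. N y \<le> C * norm y"
    and m: "m > 0" "m \<le> 1" "\<And>y. m * norm y \<le> N y"
    and c0: "c0 > 0"
    and lim: "\<forall>g k. dyadic_cube g k \<subseteq> U \<longrightarrow>
       ereal c0 < liminf (\<lambda>j. ereal (2 powr (- real CARD('n) * real j) * real (card (dyadicM a g k j))))"
    and Adef: "A = a ` {1..}"
    and Hdef: "\<And>p. H p = real (LEAST n. n \<ge> 1 \<and> p = a n) powr (1 / real CARD('n))"
    and r: "r > 0" "nball N x r \<subseteq> U"
  shows "\<exists>hB>0. \<forall>h>hB. \<exists>S. S \<subseteq> A \<inter> nball N x r \<and> finite S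
            \<and> real (card S) \<ge> (c0 / 2 ^ CARD('n) * (m / (8 * C * real CARD('n))) ^ CARD('n))
                  * (2 * r) ^ CARD('n) * h ^ CARD('n)
            \<and> (\<forall>a\<in>S. H a \<le> h)
            \<and> (\<forall>a\<in>S. \<forall>a'\<in>S. a \<noteq> a' \<longrightarrow> N (a - a') \<ge> 1 / h)"
proof -
  define d where "d = CARD('n)"
  have d0: "d > 0" unfolding d_def by simp
  define \<rho> where "\<rho> = r / (C * real d)"
  have \<rho>0: "\<rho> > 0" unfolding \<rho>_def using r C d0 by simp
  define g :: int where "g = \<lfloor>- log 2 \<rho>\<rfloor> + 1"
  have g1: "2 powr (- real_of_int g) < \<rho>"
  proof -
    have "- real_of_int g < log 2 \<rho>" unfolding g_def by linarith
    then have "2 powr (- real_of_int g) < 2 powr (log 2 \<rho>)" by simp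
    then show ?thesis using \<rho>0 by simp
  qed
  have g2: "\<rho> / 2 \<le> 2 powr (- real_of_int g)"
  proof -
    have "log 2 \<rho> - 1 \<le> - real_of_int g" unfolding g_def by linarith
    then have "2 powr (log 2 \<rho> - 1) \<le> 2 powr (- real_of_int g)" by simp
    then show ?thesis using \<rho>0 by (simp add: powr_diff)
  qed
  define k where "k = (\<lambda>i. \<lfloor>2 powr real_of_int g * x $ i\<rfloor>)"
  have xin: "x \<in> dyadic_cube g k" unfolding k_def by (rule cube_exists)
  have lamB: "dyadic_cube g k \<subseteq> nball N x r"
  proof
    fix y assume y: "y \<in> dyadic_cube g k"
    have "N (y - x) \<le> C * norm (y - x)" by (rule C)
    also have "\<dots> \<le> C * (real d * 2 powr (- real_of_int g))"
      using cube_small[OF y xin] C unfolding d_def by simp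
    also have "\<dots> < C * (real d * \<rho>)" using g1 C d0 by simp
    also have "\<dots> = r" unfolding \<rho>_def using C d0 by simp
    finally show "y \<in> nball N x r" unfolding nball_def by simp
  qed
  then have lamU: "dyadic_cube g k \<subseteq> U" using r by blast
  have "\<forall>\<^sub>F j in sequentially. ereal c0 < ereal (2 powr (- real d * real j) * real (card (dyadicM a g k j)))"
    using less_LiminfD[OF lim[rule_format, OF lamU]] unfolding d_def .
  then obtain J where J: "\<And>j. j \<ge> J \<Longrightarrow> c0 < 2 powr (- real d * real j) * real (card (dyadicM a g k j))"
    unfolding eventually_sequentially by auto
  define hB where "hB = 2 powr (real_of_int g + real J + 1) / m"
  have hB0: "hB > 0" unfolding hB_def using m by simp
  show ?thesis unfolding d_def[symmetric]
  proof (intro exI[of _ hB] conjI allI impI hB0)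
    fix h assume h: "h > hB"
    have h0: "h > 0" using h hB0 by simp
    have mh: "m * h > 2 powr (real_of_int g + real J + 1)" using h m unfolding hB_def by (simp add: field_simps)
    define G :: int where "G = \<lfloor>log 2 (m * h)\<rfloor>"
    have mh0: "m * h > 0" using m h0 by simp
    have "log 2 (m * h) > real_of_int g + real J + 1"
      using mh mh0 by (subst less_log_iff) auto
    then have GgJ: "G \<ge> g + int J + 1" unfolding G_def by linarith
    have G1: "2 powr real_of_int G \<le> m * h"
    proof -
      have "real_of_int G \<le> log 2 (m * h)" unfolding G_def by linarith
      then have "2 powr real_of_int G \<le> 2 powr (log 2 (m * h))" by simp
      then show ?thesis using mh0 by simp
    qed
    have G2: "m * h / 2 < 2 powr real_of_int G"
    proof -
      have "log 2 (m * h) - 1 < real_of_int G" unfolding G_def by linarith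
      then have "2 powr (log 2 (m * h) - 1) < 2 powr real_of_int G" by simp
      then show ?thesis using mh0 by (simp add: powr_diff)
    qed
    define j where "j = nat (G - g)"
    have jG: "g + int j = G" unfolding j_def using GgJ by simp
    have jJ: "j \<ge> J" unfolding j_def using GgJ by simp
    define M where "M = dyadicM a g k j"
    have cM: "c0 * 2 powr (real d * real j) < real (card M)"
    proof -
      have "c0 < 2 powr (- real d * real j) * real (card M)" using J[OF jJ] unfolding M_def .
      then show ?thesis by (simp add: powr_minus field_simps)
    qed
    moreover have "0 < c0 * 2 powr (real d * real j)" using c0 by simp
    ultimately have "card M > 0" by linarith
    then have finM: "finite M" using card_ge_0_finite by blast
    define par where "par k' = {i. k' i mod 2 = 1}" for k' :: "'n \<Rightarrow> int"
    obtain P where P: "card M \<le> card (UNIV :: 'n set set) * card {k'\<in>M. par k' = P}"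
      using pigeon[OF finM, of UNIV par] by auto
    define M' where "M' = {k'\<in>M. par k' = P}"
    have cardP: "card (UNIV :: 'n set set) = 2 ^ d" unfolding d_def
      using card_Pow[of "UNIV :: 'n set"] by (simp add: Pow_UNIV)
    have finM': "finite M'" unfolding M'_def using finM by simp
    have Mprop: "\<exists>n\<ge>1. real n \<le> 2 powr (real d * real_of_int G) \<and> a n \<in> dyadic_cube G k'"
      "dyadic_cube G k' \<subseteq> dyadic_cube g k" if "k' \<in> M'" for k'
      using that unfolding M'_def M_def dyadicM_def d_def jG by auto
    define pick where "pick k' = (SOME n. n\<ge>1 \<and> real n \<le> 2 powr (real d * real_of_int G) \<and> a n \<in> dyadic_cube G k')" for k'
    have pick: "pick k' \<ge> 1" "real (pick k') \<le> 2 powr (real d * real_of_int G)" "a (pick k') \<in> dyadic_cube G k'"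
      if "k' \<in> M'" for k'
      using someI_ex[OF Mprop(1)[OF that]] unfolding pick_def by auto
    define S where "S = (\<lambda>k'. a (pick k')) ` M'"
    have inj: "inj_on (\<lambda>k'. a (pick k')) M'"
    proof (rule inj_onI)
      fix k1 k2 assume "k1 \<in> M'" "k2 \<in> M'" "a (pick k1) = a (pick k2)"
      have "k1 i = k2 i" for i
        using cube_index[OF pick(3)[OF \<open>k1 \<in> M'\<close>], of i] cube_index[OF pick(3)[OF \<open>k2 \<in> M'\<close>], of i]
          \<open>a (pick k1) = a (pick k2)\<close> by simp
      then show "k1 = k2" by (rule ext)
    qed
    have cardS: "card S = card M'" unfolding S_def using card_image[OF inj] .
    show "\<exists>S. S \<subseteq> A \<inter> nball N x r \<and> finite S
            \<and> real (card S) \<ge> (c0 / 2 ^ d * (m / (8 * C * real d)) ^ d) * (2 * r) ^ d * h ^ d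
            \<and> (\<forall>a\<in>S. H a \<le> h)
            \<and> (\<forall>a\<in>S. \<forall>a'\<in>S. a \<noteq> a' \<longrightarrow> N (a - a') \<ge> 1 / h)"
    proof (intro exI[of _ S] conjI)
      show "S \<subseteq> A \<inter> nball N x r"
      proof
        fix p assume "p \<in> S"
        then obtain k' where k': "k' \<in> M'" "p = a (pick k')" unfolding S_def by auto
        have "p \<in> A" unfolding Adef using k' pick(1)[OF k'(1)] by auto
        moreover have "p \<in> nball N x r" using k' pick(3)[OF k'(1)] Mprop(2)[OF k'(1)] lamB by auto
        ultimately show "p \<in> A \<inter> nball N x r" by simp
      qed
      show "finite S" unfolding S_def using finM' by simp
      show "\<forall>p\<in>S. H p \<le> h"
      proof
        fix p assume "p \<in> S"
        then obtain k' where k': "k' \<in> M'" "p = a (pick k')" unfolding S_def by auto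
        define n where "n = pick k'"
        have n1: "n \<ge> 1" "real n \<le> 2 powr (real d * real_of_int G)" using pick[OF k'(1)] unfolding n_def by auto
        have L: "(LEAST n. n \<ge> 1 \<and> p = a n) \<le> n" using n1 k'(2) unfolding n_def by (intro Least_le) simp
        have L1: "(LEAST n. n \<ge> 1 \<and> p = a n) \<ge> 1" using LeastI[of "\<lambda>n. n \<ge> 1 \<and> p = a n" n] n1 k'(2) unfolding n_def by simp
        have "H p = real (LEAST n. n \<ge> 1 \<and> p = a n) powr (1 / real d)" unfolding Hdef d_def ..
        also have "\<dots> \<le> real n powr (1 / real d)" using L L1 d0 by (intro powr_mono2) auto
        also have "\<dots> \<le> (2 powr (real d * real_of_int G)) powr (1 / real d)" using n1 d0 by (intro powr_mono2) auto
        also have "\<dots> = 2 powr real_of_int G" using d0 by (simp add: powr_powr)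
        also have "\<dots> \<le> h" using G1 m h0 mult_left_le_one_le[of h m] by linarith
        finally show "H p \<le> h" .
      qed
      show "\<forall>p\<in>S. \<forall>p'\<in>S. p \<noteq> p' \<longrightarrow> N (p - p') \<ge> 1 / h"
      proof (intro ballI impI)
        fix p p' assume "p \<in> S" "p' \<in> S" "p \<noteq> p'"
        then obtain k1 k2 where k: "k1 \<in> M'" "p = a (pick k1)" "k2 \<in> M'" "p' = a (pick k2)" unfolding S_def by auto
        then have "k1 \<noteq> k2" using \<open>p \<noteq> p'\<close> by auto
        then obtain i where i: "k1 i \<noteq> k2 i" by auto
        have "par k1 = par k2" using k unfolding M'_def by simp
        then have "(k1 i mod 2 = 1) = (k2 i mod 2 = 1)" unfolding par_def by blast
        then have "k1 i mod 2 = k2 i mod 2" by (metis not_mod_2_eq_0_eq_1)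
        then have sep: "2 powr (- real_of_int G) \<le> norm (p - p')"
          using cube_sep[OF pick(3)[OF k(1)] pick(3)[OF k(3)] i] k by simp
        have "1 / h \<le> m * 2 powr (- real_of_int G)"
          using G1 h0 m by (simp add: powr_minus field_simps)
        also have "\<dots> \<le> m * norm (p - p')" using sep m by simp
        also have "\<dots> \<le> N (p - p')" by (rule m)
        finally show "N (p - p') \<ge> 1 / h" .
      qed
      show "(c0 / 2 ^ d * (m / (8 * C * real d)) ^ d) * (2 * r) ^ d * h ^ d \<le> real (card S)"
      proof -
        have e: "real j = real_of_int G + (- real_of_int g)" using jG by linarith
        have pj: "2 powr real j = 2 powr real_of_int G * 2 powr (- real_of_int g)"
          unfolding e by (rule powr_add)
        have "m * r * h / (4 * C * real d) = (m * h / 2) * (\<rho> / 2)" unfolding \<rho>_def by (simp add: field_simps)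
        also have "\<dots> \<le> 2 powr real j" unfolding pj
          using G2 g2 mh0 \<rho>0 by (intro mult_mono) auto
        finally have b1: "m * r * h / (4 * C * real d) \<le> 2 powr real j" .
        have "(m * r * h / (4 * C * real d)) ^ d \<le> (2 powr real j) ^ d"
          using b1 m r h0 C d0 by (intro power_mono) auto
        also have "\<dots> = 2 powr (real d * real j)" by (simp add: powr_realpow[symmetric] powr_powr mult.commute)
        finally have b2: "(m * r * h / (4 * C * real d)) ^ d \<le> 2 powr (real d * real j)" .
        have "(c0 / 2 ^ d * (m / (8 * C * real d)) ^ d) * (2 * r) ^ d * h ^ d
              = c0 * (m * r * h / (4 * C * real d)) ^ d / 2 ^ d"
          using power_mult_distrib[of "2::real" 4 d] by (simp add: power_divide power_mult_distrib field_simps)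
        also have "\<dots> \<le> c0 * 2 powr (real d * real j) / 2 ^ d" using b2 c0 by (simp add: divide_right_mono)
        also have "\<dots> \<le> real (card M) / 2 ^ d" using cM by (simp add: divide_right_mono)
        also have "\<dots> \<le> real (card S)"
        proof -
          have "real (card M) \<le> real (2 ^ d * card M')" using P cardP unfolding M'_def
            by (simp only: of_nat_le_iff)
          then show ?thesis using cardS by (simp add: field_simps)
        qed
        finally show ?thesis .
      qed
    qed
  qed
qed

lemma ndiam_bounds:
  fixes N :: "real^'n \<Rightarrow> real"
  assumes nrm: "is_norm N" and r: "r > 0"
  shows "0 \<le> ndiam N (nball N x r)" "ndiam N (nball N x r) \<le> 2 * r"
proof -
  define D where "D = {N (y - z) | y z. y \<in> nball N x r \<and> z \<in> nball N x r}"
  have xB: "x \<in> nball N x r" unfolding nball_def using r isn_basic(1)[OF nrm] by simp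
  have bd: "t \<le> 2 * r" if tD: "t \<in> D" for t
  proof -
    obtain y z where yz0: "t = N (y - z)" "y \<in> nball N x r" "z \<in> nball N x r"
      using tD unfolding D_def by blast
    then have yz: "t = N (y - z)" "N (y - x) < r" "N (z - x) < r" unfolding nball_def by auto
    have "N (y - z) \<le> N (y - x) + N (x - z)" using isn_basic(4)[OF nrm, of "y - x" "x - z"] by simp
    also have "N (x - z) = N (z - x)" by (rule isn_basic(3)[OF nrm])
    finally show ?thesis using yz by simp
  qed
  have "0 \<in> D" unfolding D_def using xB isn_basic(1)[OF nrm] by force
  then show "0 \<le> ndiam N (nball N x r)" unfolding ndiam_def D_def[symmetric]
    using bd by (intro cSup_upper) (auto intro!: bdd_aboveI[of D "2 * r"])
  show "ndiam N (nball N x r) \<le> 2 * r" unfolding ndiam_def D_def[symmetric]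
    using bd \<open>0 \<in> D\<close> by (intro cSup_least) auto
qed

lemma H_bound:
  fixes a :: "nat \<Rightarrow> real^'n"
  assumes Adef: "A = a ` {1..}"
    and Hdef: "\<And>p. H p = real (LEAST n. n \<ge> 1 \<and> p = a n) powr (1 / real CARD('n))"
    and h: "h > 0"
  shows "{p\<in>A. H p \<le> h} \<subseteq> a ` {1..nat \<lfloor>h ^ CARD('n)\<rfloor>}"
proof
  fix p assume p: "p \<in> {p\<in>A. H p \<le> h}"
  then obtain n0 where n0: "n0 \<ge> 1" "p = a n0" unfolding Adef by auto
  define L where "L = (LEAST n. n \<ge> 1 \<and> p = a n)"
  have L: "L \<ge> 1" "p = a L" using LeastI[of "\<lambda>n. n \<ge> 1 \<and> p = a n" n0] n0 unfolding L_def by auto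
  have d0: "CARD('n) > 0" by simp
  have "real L = (real L powr (1 / real CARD('n))) powr real CARD('n)"
    using L d0 by (simp add: powr_powr)
  also have "\<dots> = (real L powr (1 / real CARD('n))) ^ CARD('n)"
    using L by (intro powr_realpow) simp
  also have "\<dots> \<le> h ^ CARD('n)" using p Hdef[of p] unfolding L_def[symmetric]
    by (intro power_mono) auto
  finally have "L \<le> nat \<lfloor>h ^ CARD('n)\<rfloor>" by (rule le_nat_floor)
  then show "p \<in> a ` {1..nat \<lfloor>h ^ CARD('n)\<rfloor>}" using L by auto
qed

lemma H_card:
  fixes a :: "nat \<Rightarrow> real^'n"
  assumes Adef: "A = a ` {1..}"
    and Hdef: "\<And>p. H p = real (LEAST n. n \<ge> 1 \<and> p = a n) powr (1 / real CARD('n))"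
    and h: "h > 0" and sub: "X \<subseteq> {p\<in>A. H p \<le> h}"
  shows "finite X" "real (card X) \<le> h ^ CARD('n)"
proof -
  have X: "X \<subseteq> a ` {1..nat \<lfloor>h ^ CARD('n)\<rfloor>}" using H_bound[OF Adef Hdef h] sub by blast
  then show "finite X" by (rule finite_subset) simp
  have "card X \<le> card (a ` {1..nat \<lfloor>h ^ CARD('n)\<rfloor>})" using X by (intro card_mono) auto
  also have "\<dots> \<le> card {1..nat \<lfloor>h ^ CARD('n)\<rfloor>}" by (rule card_image_le) simp
  also have "\<dots> = nat \<lfloor>h ^ CARD('n)\<rfloor>" by simp
  finally have "real (card X) \<le> real (nat \<lfloor>h ^ CARD('n)\<rfloor>)" by simp
  also have "\<dots> \<le> h ^ CARD('n)" using h by simp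
  finally show "real (card X) \<le> h ^ CARD('n)" .
qed

theorem proposition9p4:
  fixes N :: "real^'n \<Rightarrow> real" and U :: "(real^'n) set" and a :: "nat \<Rightarrow> real^'n"
    and A :: "(real^'n) set" and H :: "real^'n \<Rightarrow> real"
  assumes "is_norm N"
    and "open U" and "U \<noteq> {}"
    and "\<forall>n\<ge>1. a n \<in> U"
    and "Inf {liminf (\<lambda>j. ereal (2 powr (- real CARD('n) * real j) * real (card (dyadicM a g k j))))
              | g k. dyadic_cube g k \<subseteq> U} > 0"
    and "A = a ` {1..}"
    and "\<And>p. H p = real (LEAST n. n \<ge> 1 \<and> p = a n) powr (1 / real CARD('n))"
  shows "optimal_regular_system N A H U"
proof -
  note nrm = assms(1) and Adef = assms(6) and Hdef = assms(7)
  define d where "d = CARD('n)"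
  have d0: "d > 0" unfolding d_def by simp
  obtain C where C: "C > 0" "\<And>y. N y \<le> C * norm y" using isn_upper[OF nrm] by blast
  obtain m0 where m0: "m0 > 0" "\<And>y. m0 * norm y \<le> N y" using isn_lower[OF nrm] by blast
  define m where "m = min m0 1"
  have m: "m > 0" "m \<le> 1" "\<And>y. m * norm y \<le> N y"
    using m0 unfolding m_def by (auto intro: order_trans[OF mult_right_mono[OF min.cobounded1]])
  obtain c0 where c0: "ereal 0 < ereal c0" "ereal c0 < Inf {liminf (\<lambda>j. ereal (2 powr (- real CARD('n) * real j) * real (card (dyadicM a g k j))))
              | g k. dyadic_cube g k \<subseteq> U}"
    using ereal_dense2[OF assms(5)[unfolded zero_ereal_def]] by blast
  have c0p: "c0 > 0" using c0(1) by simp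
  have lim: "\<forall>g k. dyadic_cube g k \<subseteq> U \<longrightarrow> ereal c0 < liminf (\<lambda>j. ereal (2 powr (- real CARD('n) * real j) * real (card (dyadicM a g k j))))"
  proof (intro allI impI)
    fix g k assume that: "dyadic_cube g k \<subseteq> U"
    have "Inf {liminf (\<lambda>j. ereal (2 powr (- real CARD('n) * real j) * real (card (dyadicM a g k j))))
              | g k. dyadic_cube g k \<subseteq> U} \<le> liminf (\<lambda>j. ereal (2 powr (- real CARD('n) * real j) * real (card (dyadicM a g k j))))"
      by (rule Inf_lower) (use that in blast)
    then show "ereal c0 < liminf (\<lambda>j. ereal (2 powr (- real CARD('n) * real j) * real (card (dyadicM a g k j))))" by (rule less_le_trans[OF c0(2)])
  qed
  define K where "K = c0 / 2 ^ CARD('n) * (m / (8 * C * real CARD('n))) ^ CARD('n)"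
  have K0: "K > 0" unfolding K_def using c0p m C by simp
  note core = regular_core[where U=U, OF nrm C m c0p lim Adef Hdef, folded K_def]
  have infA: "infinite A"
  proof
    assume finA: "finite A"
    obtain x where "x \<in> U" using assms(3) by blast
    then obtain e where e: "e > 0" "ball x e \<subseteq> U" using assms(2) open_contains_ball by blast
    define r where "r = m * e"
    have r0: "r > 0" unfolding r_def using e m by simp
    have "nball N x r \<subseteq> ball x e"
    proof
      fix y assume "y \<in> nball N x r"
      then have "m * norm (y - x) < m * e" using m(3)[of "y - x"] unfolding nball_def r_def by simp
      then show "y \<in> ball x e" using m by (simp add: dist_norm norm_minus_commute)
    qed
    then have "nball N x r \<subseteq> U" using e by blast
    from core[OF r0 this] obtain hB where hB: "hB > 0 \<and> (\<forall>h>hB. \<exists>S. S \<subseteq> A \<inter> nball N x r \<and> finite S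
            \<and> real (card S) \<ge> K * (2 * r) ^ CARD('n) * h ^ CARD('n)
            \<and> (\<forall>a\<in>S. H a \<le> h)
            \<and> (\<forall>a\<in>S. \<forall>a'\<in>S. a \<noteq> a' \<longrightarrow> N (a - a') \<ge> 1 / h))" by (elim exE)
    define Q where "Q = K * (2 * r) ^ CARD('n)"
    have Q0: "Q > 0" unfolding Q_def using K0 r0 by simp
    define h where "h = max (hB + 1) (max 1 ((real (card A) + 1) / Q))"
    have h1: "h \<ge> 1" "h > hB" unfolding h_def by auto
    obtain S where S0: "S \<subseteq> A \<inter> nball N x r \<and> finite S
            \<and> real (card S) \<ge> K * (2 * r) ^ CARD('n) * h ^ CARD('n)
            \<and> (\<forall>a\<in>S. H a \<le> h)
            \<and> (\<forall>a\<in>S. \<forall>a'\<in>S. a \<noteq> a' \<longrightarrow> N (a - a') \<ge> 1 / h)"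
      using mp[OF spec[OF conjunct2[OF hB], of h] h1(2)] by (rule exE)
    have S: "S \<subseteq> A" "real (card S) \<ge> Q * h ^ CARD('n)" using S0 unfolding Q_def by auto
    have "h \<le> h ^ CARD('n)" using power_increasing[of 1 "CARD('n)" h] h1 by simp
    then have "Q * h \<le> Q * h ^ CARD('n)" using Q0 by simp
    moreover have "real (card A) + 1 \<le> Q * h"
    proof -
      have "(real (card A) + 1) / Q \<le> h" unfolding h_def by simp
      then show ?thesis using Q0 by (simp add: field_simps)
    qed
    moreover have "card S \<le> card A" using S(1) by (rule card_mono[OF finA])
    ultimately show False using S(2) by linarith
  qed
  have adm: "admissible N A H"
    unfolding admissible_def
  proof (intro conjI ballI allI impI infA)
    show "countable A" unfolding Adef by simp
    fix p assume "p \<in> A"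
    then obtain n0 where n0: "n0 \<ge> 1" "p = a n0" unfolding Adef by auto
    have L: "(LEAST n. n \<ge> 1 \<and> p = a n) \<ge> 1" using LeastI[of "\<lambda>n. n \<ge> 1 \<and> p = a n" n0] n0 by auto
    then show "0 < H p" unfolding Hdef by simp
  next
    fix mm :: nat assume "mm \<ge> 1"
    then show "finite {p\<in>A. N p < real mm \<and> H p \<le> real mm}"
      using H_card(1)[OF Adef Hdef, of "real mm" "{p\<in>A. N p < real mm \<and> H p \<le> real mm}"] by auto
  qed
  have opt: "optimal_system N A H U"
    unfolding optimal_system_def
  proof (intro conjI adm allI impI)
    fix x r assume "(r::real) > 0"
    show "\<exists>\<kappa>'>0. \<exists>h'>0. \<forall>h>h'. finite {p \<in> A \<inter> U \<inter> nball N x r. H p \<le> h} \<and>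
        real (card {p \<in> A \<inter> U \<inter> nball N x r. H p \<le> h}) \<le> \<kappa>' * h ^ CARD('n)"
    proof (intro exI[of _ 1] conjI allI impI zero_less_one)
      fix h :: real assume "h > 1"
      then have h0: "h > 0" by simp
      have sub: "{p \<in> A \<inter> U \<inter> nball N x r. H p \<le> h} \<subseteq> {p\<in>A. H p \<le> h}" by auto
      show "finite {p \<in> A \<inter> U \<inter> nball N x r. H p \<le> h}" by (rule H_card(1)[OF Adef Hdef h0 sub])
      show "real (card {p \<in> A \<inter> U \<inter> nball N x r. H p \<le> h}) \<le> 1 * h ^ CARD('n)"
        using H_card(2)[OF Adef Hdef h0 sub] by simp
    qed
  qed
  have reg: "regular_system N A H U"
    unfolding regular_system_def
  proof (rule conjI[OF adm], rule exI[of _ K], rule conjI[OF K0], intro allI impI)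
    fix x r assume xr: "(r::real) > 0 \<and> nball N x r \<subseteq> U"
    from core[OF conjunct1[OF xr] conjunct2[OF xr]] obtain hB where hB: "hB > 0 \<and> (\<forall>h>hB. \<exists>S. S \<subseteq> A \<inter> nball N x r \<and> finite S
            \<and> real (card S) \<ge> K * (2 * r) ^ CARD('n) * h ^ CARD('n)
            \<and> (\<forall>a\<in>S. H a \<le> h)
            \<and> (\<forall>a\<in>S. \<forall>a'\<in>S. a \<noteq> a' \<longrightarrow> N (a - a') \<ge> 1 / h))" by (elim exE)
    have nd: "0 \<le> ndiam N (nball N x r)" "ndiam N (nball N x r) \<le> 2 * r"
      using ndiam_bounds[OF nrm conjunct1[OF xr]] by auto
    show "\<exists>hB>0. \<forall>h>hB. \<exists>S. S \<subseteq> A \<inter> nball N x r \<and> finite S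
            \<and> real (card S) \<ge> K * (ndiam N (nball N x r)) ^ CARD('n) * h ^ CARD('n)
            \<and> (\<forall>a\<in>S. H a \<le> h)
            \<and> (\<forall>a\<in>S. \<forall>a'\<in>S. a \<noteq> a' \<longrightarrow> N (a - a') \<ge> 1 / h)"
    proof (rule exI[of _ hB], rule conjI[OF conjunct1[OF hB]], intro allI impI)
      fix h assume h: "h > hB"
      obtain S where S0: "S \<subseteq> A \<inter> nball N x r \<and> finite S
            \<and> real (card S) \<ge> K * (2 * r) ^ CARD('n) * h ^ CARD('n)
            \<and> (\<forall>a\<in>S. H a \<le> h)
            \<and> (\<forall>a\<in>S. \<forall>a'\<in>S. a \<noteq> a' \<longrightarrow> N (a - a') \<ge> 1 / h)"
        using mp[OF spec[OF conjunct2[OF hB], of h] h] by (rule exE)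
      have S: "S \<subseteq> A \<inter> nball N x r" "finite S"
            "real (card S) \<ge> K * (2 * r) ^ CARD('n) * h ^ CARD('n)"
            "(\<forall>a\<in>S. H a \<le> h)" "(\<forall>a\<in>S. \<forall>a'\<in>S. a \<noteq> a' \<longrightarrow> N (a - a') \<ge> 1 / h)"
        using S0 by auto
      have "K * (ndiam N (nball N x r)) ^ CARD('n) * h ^ CARD('n) \<le> K * (2 * r) ^ CARD('n) * h ^ CARD('n)"
        using nd K0 h hB by (intro mult_right_mono mult_left_mono power_mono) auto
      then have cS: "K * (ndiam N (nball N x r)) ^ CARD('n) * h ^ CARD('n) \<le> real (card S)" using S(3) by linarith
      show "\<exists>S. S \<subseteq> A \<inter> nball N x r \<and> finite S
            \<and> real (card S) \<ge> K * (ndiam N (nball N x r)) ^ CARD('n) * h ^ CARD('n)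
            \<and> (\<forall>a\<in>S. H a \<le> h)
            \<and> (\<forall>a\<in>S. \<forall>a'\<in>S. a \<noteq> a' \<longrightarrow> N (a - a') \<ge> 1 / h)"
        using S cS by (intro exI[of _ S] conjI) auto
    qed
  qed
  show ?thesis unfolding optimal_regular_system_def using opt reg by blast
qed

end
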